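(* Let $(G,k)$ be an instance of \textsc{Bicolored $P_3$ Deletion} and let $u,v,w,z$ be vertices such that $G[\{u,v,w,z\}]$ is an LC-Diamond, an LO-Diamond, or an IIZ-Diamond (with the vertex labels as in the definitions). Then $(G,k)$ is a yes-instance if and only if at least one of $(G-\{v,w\},k-1)$, $(G-\{\{u,v\},\{u,z\}\},k-2)$, $(G-\{\{u,v\},\{v,z\},\{w,z\}\},k-3)$ is a yes-instance.
   Context: A two-colored graph $G=(V,E_r,E_b)$ is a finite simple undirected graph whose edge set $E=E_r\uplus E_b$ is partitioned into red and blue edges; $G-F$ removes the edges in $F$ (and $G-\{v,w\}$ removes the single edge $\{v,w\}$). A bicolored $P_3$ is an induced subgraph on three vertices $a,b,c$ with edges $\{a,b\},\{b,c\}$ of different colors and $\{a,c\}\notin E$. The following are defined up to swapping the two colors (both versions count). An LC-Diamond on $u,v,w,z$: edges exactly $\{u,v\}$ blue, $\{v,w\}$ red, $\{u,z\}$ blue, $\{v,z\}$ red, $\{w,z\}$ blue. An LO-Diamond on $u,v,w,z$: edges exactly $\{u,v\}$ blue, $\{v,w\}$ red, $\{u,z\}$ blue, $\{v,z\}$ blue, $\{w,z\}$ red. An IIZ-Diamond on $u,v,w,z$: edges exactly $\{u,v\}$ blue, $\{v,w\}$ red, $\{u,z\}$ red, $\{v,z\}$ blue, $\{w,z\}$ blue. \textsc{Bicolored $P_3$ Deletion}: given $G$ and an integer $k$, decide whether some $S\subseteq E$ with $|S|\le k$ makes $G-S$ free of induced bicolored $P_3$s (no-instance if $k<0$). *)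

theory Defs
  imports Main
begin

definition two_colored_graph :: "'a set \<Rightarrow> 'a set set \<Rightarrow> 'a set set \<Rightarrow> bool" where
  "two_colored_graph V Er Eb \<longleftrightarrow> finite V \<and> Er \<inter> Eb = {} \<and>
     (\<forall>e \<in> Er \<union> Eb. \<exists>x y. x \<noteq> y \<and> x \<in> V \<and> y \<in> V \<and> e = {x, y})"

definition bicolored_P3 :: "'a set set \<Rightarrow> 'a set set \<Rightarrow> 'a \<Rightarrow> 'a \<Rightarrow> 'a \<Rightarrow> bool" where
  "bicolored_P3 Er Eb a b c \<longleftrightarrow> a \<noteq> b \<and> b \<noteq> c \<and> a \<noteq> c \<and>
     (({a,b} \<in> Er \<and> {b,c} \<in> Eb) \<or> ({a,b} \<in> Eb \<and> {b,c} \<in> Er)) \<and>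
     {a,c} \<notin> Er \<union> Eb"

definition P3_free :: "'a set set \<Rightarrow> 'a set set \<Rightarrow> bool" where
  "P3_free Er Eb \<longleftrightarrow> (\<nexists>a b c. bicolored_P3 Er Eb a b c)"

text \<open>(G,k) is a yes-instance of Bicolored P3 Deletion (no-instance if k < 0).
  G - S removes the edges in S from both colour classes.\<close>
definition yes_instance :: "'a set \<Rightarrow> 'a set set \<Rightarrow> 'a set set \<Rightarrow> int \<Rightarrow> bool" where
  "yes_instance V Er Eb k \<longleftrightarrow> k \<ge> 0 \<and>
     (\<exists>S. S \<subseteq> Er \<union> Eb \<and> finite S \<and> int (card S) \<le> k \<and> P3_free (Er - S) (Eb - S))"

definition LC_pat :: "'a set set \<Rightarrow> 'a set set \<Rightarrow> 'a \<Rightarrow> 'a \<Rightarrow> 'a \<Rightarrow> 'a \<Rightarrow> bool" where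
  "LC_pat R B u v w z \<longleftrightarrow> distinct [u,v,w,z] \<and>
     {u,v} \<in> B \<and> {v,w} \<in> R \<and> {u,z} \<in> B \<and> {v,z} \<in> R \<and> {w,z} \<in> B \<and> {u,w} \<notin> R \<union> B"

definition LO_pat :: "'a set set \<Rightarrow> 'a set set \<Rightarrow> 'a \<Rightarrow> 'a \<Rightarrow> 'a \<Rightarrow> 'a \<Rightarrow> bool" where
  "LO_pat R B u v w z \<longleftrightarrow> distinct [u,v,w,z] \<and>
     {u,v} \<in> B \<and> {v,w} \<in> R \<and> {u,z} \<in> B \<and> {v,z} \<in> B \<and> {w,z} \<in> R \<and> {u,w} \<notin> R \<union> B"

definition IIZ_pat :: "'a set set \<Rightarrow> 'a set set \<Rightarrow> 'a \<Rightarrow> 'a \<Rightarrow> 'a \<Rightarrow> 'a \<Rightarrow> bool" where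
  "IIZ_pat R B u v w z \<longleftrightarrow> distinct [u,v,w,z] \<and>
     {u,v} \<in> B \<and> {v,w} \<in> R \<and> {u,z} \<in> R \<and> {v,z} \<in> B \<and> {w,z} \<in> B \<and> {u,w} \<notin> R \<union> B"

definition LC_diamond where
  "LC_diamond Er Eb u v w z \<longleftrightarrow> LC_pat Er Eb u v w z \<or> LC_pat Eb Er u v w z"
definition LO_diamond where
  "LO_diamond Er Eb u v w z \<longleftrightarrow> LO_pat Er Eb u v w z \<or> LO_pat Eb Er u v w z"
definition IIZ_diamond where
  "IIZ_diamond Er Eb u v w z \<longleftrightarrow> IIZ_pat Er Eb u v w z \<or> IIZ_pat Eb Er u v w z"

end

theory Submission
  imports Defs
begin

lemma P3_free_sym: "P3_free X Y \<Longrightarrow> P3_free Y X"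
  unfolding P3_free_def bicolored_P3_def by (auto simp: insert_commute)

lemma core1:
  assumes "LC_pat R B u v w z \<or> LO_pat R B u v w z \<or> IIZ_pat R B u v w z" "P3_free (R - S) (B - S)"
  shows "{v,w} \<in> S \<or> ({u,v} \<in> S \<and> {u,z} \<in> S) \<or> ({u,v} \<in> S \<and> {v,z} \<in> S \<and> {w,z} \<in> S)"
proof -
  have n: "\<not> bicolored_P3 (R - S) (B - S) a b c" for a b c using assms(2) unfolding P3_free_def by blast
  have d: "distinct [u,v,w,z]" using assms(1) unfolding LC_pat_def LO_pat_def IIZ_pat_def by blast
  note nn = n[of u v w] n[of w v u] n[of u z w] n[of w z u] n[of v u z] n[of u v z] n[of v z u]
     n[of z u v] n[of u z v] n[of v w z] n[of w v z] n[of v z w] n[of z w v] n[of w z v] n[of z v w] n[of z v u]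
  show ?thesis using assms(1)
  proof (elim disjE)
    assume p: "LC_pat R B u v w z"
    show ?thesis using p d nn unfolding LC_pat_def bicolored_P3_def
      by (cases "{u,v} \<in> S"; cases "{u,z}\<in>S"; cases "{v,z}\<in>S"; cases "{w,z}\<in>S"; cases "{v,w}\<in>S"; simp add: insert_commute)
  next
    assume p: "LO_pat R B u v w z"
    show ?thesis using p d nn unfolding LO_pat_def bicolored_P3_def
      by (cases "{u,v} \<in> S"; cases "{u,z}\<in>S"; cases "{v,z}\<in>S"; cases "{w,z}\<in>S"; cases "{v,w}\<in>S"; simp add: insert_commute)
  next
    assume p: "IIZ_pat R B u v w z"
    show ?thesis using p d nn unfolding IIZ_pat_def bicolored_P3_def
      by (cases "{u,v} \<in> S"; cases "{u,z}\<in>S"; cases "{v,z}\<in>S"; cases "{w,z}\<in>S"; cases "{v,w}\<in>S"; simp add: insert_commute)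
  qed
qed

lemma bwd_lem:
  assumes "F \<subseteq> Er \<union> Eb" "finite F" "yes_instance V (Er - F) (Eb - F) (k - int (card F))"
  shows "yes_instance V Er Eb k"
proof -
  obtain S where S: "S \<subseteq> (Er - F) \<union> (Eb - F)" "finite S" "int (card S) \<le> k - int (card F)"
    "P3_free (Er - F - S) (Eb - F - S)" and k: "k - int (card F) \<ge> 0"
    using assms(3) unfolding yes_instance_def by blast
  have "card (S \<union> F) \<le> card S + card F" by (rule card_Un_le)
  moreover have "Er - F - S = Er - (S \<union> F)" "Eb - F - S = Eb - (S \<union> F)" by auto
  ultimately show ?thesis unfolding yes_instance_def using S k assms(1,2)
    by (intro conjI exI[of _ "S \<union> F"]) auto
qed

lemma fwd:
  assumes "F \<subseteq> S" "S \<subseteq> Er \<union> Eb" "finite S" "int (card S) \<le> k" "P3_free (Er - S) (Eb - S)"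
  shows "yes_instance V (Er - F) (Eb - F) (k - int (card F))"
proof -
  have fF: "finite F" using assms(1,3) finite_subset by blast
  have c: "card (S - F) = card S - card F" using assms(1) fF by (simp add: card_Diff_subset)
  have le: "card F \<le> card S" using assms(1,3) card_mono by blast
  have "Er - F - (S - F) = Er - S" "Eb - F - (S - F) = Eb - S" using assms(1) by auto
  then show ?thesis unfolding yes_instance_def using assms c le
    by (intro conjI exI[of _ "S - F"]) auto
qed

theorem lemma6:
  fixes V :: "'a set" and Er Eb :: "'a set set" and k :: int and u v w z :: 'a
  assumes "two_colored_graph V Er Eb"
    and "u \<in> V" "v \<in> V" "w \<in> V" "z \<in> V"
    and "LC_diamond Er Eb u v w z \<or> LO_diamond Er Eb u v w z \<or> IIZ_diamond Er Eb u v w z"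
  shows "yes_instance V Er Eb k \<longleftrightarrow>
           (yes_instance V (Er - {{v,w}}) (Eb - {{v,w}}) (k - 1) \<or>
            yes_instance V (Er - {{u,v},{u,z}}) (Eb - {{u,v},{u,z}}) (k - 2) \<or>
            yes_instance V (Er - {{u,v},{v,z},{w,z}}) (Eb - {{u,v},{v,z},{w,z}}) (k - 3))"
proof -
  have pat: "(LC_pat Er Eb u v w z \<or> LO_pat Er Eb u v w z \<or> IIZ_pat Er Eb u v w z) \<or>
     (LC_pat Eb Er u v w z \<or> LO_pat Eb Er u v w z \<or> IIZ_pat Eb Er u v w z)"
    using assms(6) unfolding LC_diamond_def LO_diamond_def IIZ_diamond_def by blast
  have d: "distinct [u,v,w,z]" using pat unfolding LC_pat_def LO_pat_def IIZ_pat_def by blast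
  have E: "{v,w} \<in> Er \<union> Eb" "{u,v} \<in> Er \<union> Eb" "{u,z} \<in> Er \<union> Eb" "{v,z} \<in> Er \<union> Eb" "{w,z} \<in> Er \<union> Eb"
    using pat unfolding LC_pat_def LO_pat_def IIZ_pat_def by blast+
  have c1: "card {{v,w}} = 1" by simp
  have c2: "card {{u,v},{u,z}} = 2" using d by (auto simp: doubleton_eq_iff)
  have c3: "card {{u,v},{v,z},{w,z}} = 3" using d by (auto simp: doubleton_eq_iff)
  show ?thesis
  proof
    assume "yes_instance V Er Eb k"
    then obtain S where S: "S \<subseteq> Er \<union> Eb" "finite S" "int (card S) \<le> k" "P3_free (Er - S) (Eb - S)"
      unfolding yes_instance_def by blast
    have "{v,w} \<in> S \<or> ({u,v} \<in> S \<and> {u,z} \<in> S) \<or> ({u,v} \<in> S \<and> {v,z} \<in> S \<and> {w,z} \<in> S)"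
      using pat
    proof
      assume "LC_pat Er Eb u v w z \<or> LO_pat Er Eb u v w z \<or> IIZ_pat Er Eb u v w z"
      then show ?thesis by (rule core1[OF _ S(4)])
    next
      assume "LC_pat Eb Er u v w z \<or> LO_pat Eb Er u v w z \<or> IIZ_pat Eb Er u v w z"
      then show ?thesis by (rule core1[OF _ P3_free_sym[OF S(4)]])
    qed
    then show "yes_instance V (Er - {{v,w}}) (Eb - {{v,w}}) (k - 1) \<or>
            yes_instance V (Er - {{u,v},{u,z}}) (Eb - {{u,v},{u,z}}) (k - 2) \<or>
            yes_instance V (Er - {{u,v},{v,z},{w,z}}) (Eb - {{u,v},{v,z},{w,z}}) (k - 3)"
    proof (elim disjE conjE)
      assume "{v,w} \<in> S"
      then have "{{v,w}} \<subseteq> S" by simp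
      from fwd[OF this S, of V] c1 show ?thesis by simp
    next
      assume "{u,v} \<in> S" "{u,z} \<in> S"
      then have "{{u,v},{u,z}} \<subseteq> S" by simp
      from fwd[OF this S, of V] c2 show ?thesis by simp
    next
      assume "{u,v} \<in> S" "{v,z} \<in> S" "{w,z} \<in> S"
      then have "{{u,v},{v,z},{w,z}} \<subseteq> S" by simp
      from fwd[OF this S, of V] c3 show ?thesis by simp
    qed
  next
    assume "yes_instance V (Er - {{v,w}}) (Eb - {{v,w}}) (k - 1) \<or>
            yes_instance V (Er - {{u,v},{u,z}}) (Eb - {{u,v},{u,z}}) (k - 2) \<or>
            yes_instance V (Er - {{u,v},{v,z},{w,z}}) (Eb - {{u,v},{v,z},{w,z}}) (k - 3)"
    then show "yes_instance V Er Eb k"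
    proof (elim disjE)
      assume h: "yes_instance V (Er - {{v,w}}) (Eb - {{v,w}}) (k - 1)"
      show ?thesis by (rule bwd_lem[of "{{v,w}}"]) (use E h c1 in simp_all)
    next
      assume h: "yes_instance V (Er - {{u,v},{u,z}}) (Eb - {{u,v},{u,z}}) (k - 2)"
      show ?thesis by (rule bwd_lem[of "{{u,v},{u,z}}"]) (use E h c2 in simp_all)
    next
      assume h: "yes_instance V (Er - {{u,v},{v,z},{w,z}}) (Eb - {{u,v},{v,z},{w,z}}) (k - 3)"
      show ?thesis by (rule bwd_lem[of "{{u,v},{v,z},{w,z}}"]) (use E h c3 in simp_all)
    qed
  qed
qed

end
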